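(* For every $X\in\overline\Omega_{1/6}$, $$h(\mathcal{P}_{\mathcal{S}_{n,p}}(X))\le h(X)-\Big(\frac\beta4-\frac{M_1}{2}\Big)\|X^\top X-I_p\|_F^2 .$$
   Context: $f:\mathbb{R}^{n\times p}\to\mathbb{R}$ ($n\ge p$) is differentiable with $f,\nabla f$ locally Lipschitz. $\mathcal{A}(X):=\frac32I_p-\frac12X^\top X$, $h(X):=f(X\mathcal{A}(X))+\frac\beta4\|X^\top X-I_p\|_F^2$ with $\beta>0$, $G(X):=\nabla f(Y)|_{Y=X\mathcal{A}(X)}$. $\overline\Omega_r:=\{X\in\mathbb{R}^{n\times p}:\|X^\top X-I_p\|_F\le r\}$; $\Omega:=\{X:\|X\|_2\le1+\frac1{12}\}$; $M_1:=\sup_{X\in\Omega}\|G(X)\|_F$. For $X$ of full column rank with economic SVD $X=U\Sigma V^\top$ ($U\in\mathbb{R}^{n\times p}$, $V\in\mathbb{R}^{p\times p}$ with orthonormal columns, $\Sigma$ diagonal), $\mathcal{P}_{\mathcal{S}_{n,p}}(X):=UV^\top$, the orthogonal projection onto the Stiefel manifold $\mathcal{S}_{n,p}=\{X:X^\top X=I_p\}$. *)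

theory Defs
  imports "HOL-Analysis.Analysis"
begin

text \<open>Matrices in R^(n x p) are modelled as real^'p^'n (rows indexed by 'n, columns by 'p).
  The norm on this type is the Frobenius norm and the inner product is the Frobenius one.\<close>

definition locally_lipschitz :: "('a::metric_space \<Rightarrow> 'b::metric_space) \<Rightarrow> bool" where
  "locally_lipschitz g \<longleftrightarrow> (\<forall>x. \<exists>e>0. \<exists>L. L-lipschitz_on (ball x e) g)"

definition calA :: "real^'p^'n \<Rightarrow> real^'p^'p" where
  "calA X = (3/2) *\<^sub>R mat 1 - (1/2) *\<^sub>R (transpose X ** X)"

definition hfun :: "(real^'p^'n \<Rightarrow> real) \<Rightarrow> real \<Rightarrow> real^'p^'n \<Rightarrow> real" where
  "hfun f \<beta> X = f (X ** calA X) + \<beta> / 4 * (norm (transpose X ** X - mat 1))\<^sup>2"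

definition spec_norm :: "real^'p^'n \<Rightarrow> real" where
  "spec_norm X = onorm (\<lambda>v. X *v v)"

definition stiefel_proj :: "real^'p^'n \<Rightarrow> real^'p^'n" where
  "stiefel_proj X = (SOME Q. \<exists>(U::real^'p^'n) (V::real^'p^'p) (S::real^'p^'p).
      transpose U ** U = mat 1 \<and> transpose V ** V = mat 1 \<and>
      (\<forall>i j. i \<noteq> j \<longrightarrow> S $ i $ j = 0) \<and> (\<forall>i. S $ i $ i \<ge> 0) \<and>
      X = U ** S ** transpose V \<and> Q = U ** transpose V)"

end

theory Submission
  imports Defs
begin


definition dg :: "('p \<Rightarrow> real) \<Rightarrow> real^'p^'p" where
  "dg d = (\<chi> i j. if i = j then d i else 0)"

lemma dg_entry[simp]: "dg d $ i $ j = (if i = j then d i else 0)"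
  by (simp add: dg_def)

lemma transpose_dg[simp]: "transpose (dg d) = dg d"
  by (simp add: vec_eq_iff transpose_def)

lemma mult_dg_right: "(A ** dg d) $ i $ j = A $ i $ j * d j"
  by (simp add: matrix_matrix_mult_def if_distrib cong: if_cong)

lemma dg_mult_dg: "dg a ** dg b = dg (\<lambda>i. a i * b i)"
  by (simp add: vec_eq_iff mult_dg_right)

lemma dg_one: "dg (\<lambda>_. 1) = mat 1"
  by (simp add: vec_eq_iff mat_def)

lemma mat_sub3: "(V::real^'a^'b) ** A ** W - V ** B ** W = V ** (A - B) ** (W::real^'c^'a)"
  by (simp add: vec_eq_iff matrix_matrix_mult_def sum_subtractf[symmetric] algebra_simps sum_distrib_left sum_distrib_right)

lemma mat_scale3: "c *\<^sub>R ((V::real^'a^'b) ** A ** (W::real^'c^'a)) = V ** (c *\<^sub>R A) ** W"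
  by (simp add: vec_eq_iff matrix_matrix_mult_def algebra_simps sum_distrib_left sum_distrib_right)

lemma dg_sub: "dg a - dg b = dg (\<lambda>i. a i - b i)"
  by (simp add: vec_eq_iff)

lemma dg_scale: "c *\<^sub>R dg a = dg (\<lambda>i. c * a i)"
  by (simp add: vec_eq_iff)

lemma frob: "(norm (A::real^'a^'b))\<^sup>2 = trace (transpose A ** A)"
proof -
  have "(norm A)\<^sup>2 = A \<bullet> A" by (simp add: power2_norm_eq_inner)
  also have "\<dots> = (\<Sum>i\<in>UNIV. \<Sum>j\<in>UNIV. A$i$j * A$i$j)" by (simp add: inner_vec_def)
  also have "\<dots> = (\<Sum>j\<in>UNIV. \<Sum>i\<in>UNIV. A$i$j * A$i$j)" by (rule sum.swap)
  also have "\<dots> = trace (transpose A ** A)"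
    by (simp add: trace_def matrix_matrix_mult_def transpose_def)
  finally show ?thesis .
qed

lemma norm_dg: "(norm (dg d))\<^sup>2 = (\<Sum>i\<in>UNIV. (d i)\<^sup>2)"
  by (simp only: frob) (simp add: dg_mult_dg trace_def power2_eq_square)

lemma orth_inv:
  fixes U :: "real^'p^'n" and V :: "real^'p^'q" and D :: "real^'p^'p"
  assumes U: "transpose U ** U = mat 1" and V: "transpose V ** V = mat 1"
  shows "norm (U ** D ** transpose V) = norm D"
proof -
  have "(norm (U ** D ** transpose V))\<^sup>2 = trace (V ** transpose D ** (transpose U ** U) ** D ** transpose V)"
    by (simp add: frob matrix_transpose_mul matrix_mul_assoc)
  also have "\<dots> = trace (V ** (transpose D ** D ** transpose V))"
    by (simp add: U matrix_mul_assoc)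
  also have "\<dots> = trace ((transpose D ** D ** transpose V) ** V)"
    by (rule trace_mul_sym)
  also have "\<dots> = trace ((transpose D ** D) ** (transpose V ** V))"
    by (simp add: matrix_mul_assoc)
  also have "\<dots> = (norm D)\<^sup>2" by (simp add: V frob)
  finally have "(norm (U ** D ** transpose V))\<^sup>2 = (norm D)\<^sup>2" .
  then show ?thesis by (simp add: power2_eq_iff_nonneg)
qed

lemma udv_gram:
  fixes U :: "real^'p^'n" and V :: "real^'p^'p"
  assumes U: "transpose U ** U = mat 1"
  shows "transpose (U ** dg r ** transpose V) ** (U ** dg r ** transpose V) = V ** dg (\<lambda>i. r i * r i) ** transpose V"
proof -
  have "transpose (U ** dg r ** transpose V) ** (U ** dg r ** transpose V) = V ** dg r ** (transpose U ** U) ** dg r ** transpose V"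
    by (simp add: matrix_transpose_mul matrix_mul_assoc)
  also have "\<dots> = V ** dg (\<lambda>i. r i * r i) ** transpose V"
    by (simp add: U matrix_mul_assoc) (simp add: matrix_mul_assoc[symmetric] dg_mult_dg)
  finally show ?thesis .
qed

lemma udv_calA:
  fixes U :: "real^'p^'n" and V :: "real^'p^'p"
  assumes U: "transpose U ** U = mat 1" and V: "transpose V ** V = mat 1" and V': "V ** transpose V = mat 1"
  shows "calA (U ** dg r ** transpose V) = V ** dg (\<lambda>i. 3/2 - r i * r i / 2) ** transpose V"
    and "(U ** dg r ** transpose V) ** calA (U ** dg r ** transpose V) = U ** dg (\<lambda>i. r i * (3/2 - r i * r i / 2)) ** transpose V"
proof -
  have m1: "mat 1 = V ** dg (\<lambda>_. 1) ** transpose V" by (simp add: dg_one V')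
  show c: "calA (U ** dg r ** transpose V) = V ** dg (\<lambda>i. 3/2 - r i * r i / 2) ** transpose V"
    unfolding calA_def udv_gram[OF U] 
    apply (subst m1)
    apply (simp add: mat_scale3 mat_sub3 dg_scale dg_sub)
    done
  show "(U ** dg r ** transpose V) ** calA (U ** dg r ** transpose V) = U ** dg (\<lambda>i. r i * (3/2 - r i * r i / 2)) ** transpose V"
    unfolding c
    by (simp add: matrix_mul_assoc[symmetric]) (simp add: matrix_mul_assoc V dg_mult_dg)
qed



lemma symm_inner:
  fixes M :: "real^'p^'p"
  assumes "transpose M = M"
  shows "(M *v x) \<bullet> y = x \<bullet> (M *v y)"
proof -
  have "x \<bullet> (M *v y) = (x v* M) \<bullet> y" by (simp add: dot_lmul_matrix)
  also have "\<dots> = (transpose M *v x) \<bullet> y" by simp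
  finally show ?thesis using assms by simp
qed

lemma spec_sub:
  fixes M :: "real^'p^'p"
  assumes sym: "transpose M = M"
  shows "subspace W \<Longrightarrow> (\<forall>x\<in>W. M *v x \<in> W) \<Longrightarrow> \<exists>B. B \<subseteq> W \<and> W \<subseteq> span B \<and> pairwise orthogonal B
     \<and> (\<forall>b\<in>B. norm b = 1 \<and> M *v b = (b \<bullet> (M *v b)) *\<^sub>R b)"
proof (induction "dim W" arbitrary: W rule: less_induct)
  case less
  note sW = less.prems(1) and inv = less.prems(2)
  show ?case
  proof (cases "W \<subseteq> {0}")
    case True then show ?thesis by (intro exI[of _ "{}"]) auto
  next
    case False
    then obtain w where w: "w \<in> W" "w \<noteq> 0" by auto
    let ?S = "W \<inter> sphere 0 1"
    let ?q = "\<lambda>x. x \<bullet> (M *v x)"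
    have cS: "compact ?S" by (rule closed_Int_compact) (auto simp: closed_subspace sW)
    have "(1 / norm w) *\<^sub>R w \<in> ?S" using w sW by (auto simp: subspace_scale)
    then have neS: "?S \<noteq> {}" by blast
    have "continuous_on ?S ?q" by (intro continuous_intros)
    from continuous_attains_sup[OF cS neS this] obtain u where u: "u \<in> ?S" "\<And>y. y \<in> ?S \<Longrightarrow> ?q y \<le> ?q u"
      by blast
    define l where "l = ?q u"
    have uW: "u \<in> W" and nu: "norm u = 1" using u by auto
    have uu: "u \<bullet> u = 1" using nu by (simp add: dot_square_norm)
    define w' where "w' = M *v u - l *\<^sub>R u"
    have MuW: "M *v u \<in> W" using inv uW by blast
    have w'W: "w' \<in> W" unfolding w'_def by (rule subspace_diff[OF sW MuW subspace_scale[OF sW uW]])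
    have w'u: "w' \<bullet> u = 0"
    proof -
      have "w' \<bullet> u = (M *v u) \<bullet> u - l * (u \<bullet> u)" unfolding w'_def by (simp add: inner_diff_left)
      also have "(M *v u) \<bullet> u = l" unfolding l_def by (rule inner_commute)
      finally show ?thesis using uu by simp
    qed
    have uw': "u \<bullet> w' = 0" using w'u by (simp only: inner_commute)
    have eig: "w' = 0"
    proof (rule ccontr)
      assume nz: "w' \<noteq> 0"
      define a where "a = w' \<bullet> w'"
      have a0: "a > 0" using nz by (simp add: a_def)
      define c where "c = w' \<bullet> (M *v w')"
      have uMw: "u \<bullet> (M *v w') = a"
      proof -
        have "u \<bullet> (M *v w') = (M *v u) \<bullet> w'" using symm_inner[OF sym] by simp
        also have "M *v u = w' + l *\<^sub>R u" by (simp add: w'_def)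
        finally show ?thesis using uw' by (simp add: a_def inner_add_left)
      qed
      have wMu: "w' \<bullet> (M *v u) = a"
      proof -
        have "w' \<bullet> (M *v u) = (M *v w') \<bullet> u" by (rule symm_inner[OF sym, symmetric])
        also have "\<dots> = u \<bullet> (M *v w')" by (rule inner_commute)
        finally show ?thesis using uMw by simp
      qed
      define t where "t = a / (\<bar>c - l * a\<bar> + 1)"
      have t0: "t > 0" using a0 by (simp add: t_def)
      have ta: "t * (\<bar>c - l * a\<bar> + 1) = a" by (simp add: t_def)
      define x where "x = u + t *\<^sub>R w'"
      have xW: "x \<in> W" unfolding x_def using uW w'W sW by (simp add: subspace_add subspace_scale)
      have xx: "x \<bullet> x = 1 + t * t * a"
        unfolding x_def by (simp add: inner_add_left inner_add_right uu w'u uw' a_def)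
      have qx: "?q x = l + 2 * t * a + t * t * c"
        unfolding x_def by (simp add: matrix_vector_right_distrib matrix_vector_mult_scaleR inner_add_left inner_add_right
            uMw wMu c_def l_def algebra_simps)
      have xpos: "x \<bullet> x > 0" using xx a0 t0 by (simp add: add_pos_nonneg)
      then have nx: "norm x > 0" by (simp add: dot_square_norm) 
      define y where "y = (1 / norm x) *\<^sub>R x"
      have yS: "y \<in> ?S" unfolding y_def using xW sW nx by (auto simp: subspace_scale)
      have qy: "?q y = ?q x / (x \<bullet> x)"
        unfolding y_def by (simp add: matrix_vector_mult_scaleR dot_square_norm power2_eq_square)
      have "?q x / (x \<bullet> x) \<le> l" using u(2)[OF yS] qy l_def by simp
      then have "?q x \<le> l * (x \<bullet> x)" using xpos by (simp add: divide_le_eq)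
      then have "l + 2 * t * a + t * t * c \<le> l * (1 + t * t * a)" using qx xx by simp
      then have "t * (2 * a + t * (c - l * a)) \<le> 0" by (simp add: algebra_simps)
      then have h1: "2 * a + t * (c - l * a) \<le> 0" using t0 by (simp add: mult_le_0_iff)
      have "- \<bar>c - l * a\<bar> \<le> c - l * a" by simp
      then have "t * (- \<bar>c - l * a\<bar>) \<le> t * (c - l * a)" using t0 by (intro mult_left_mono) auto
      then have "t * (c - l * a) \<ge> - (t * \<bar>c - l * a\<bar>)" by simp
      moreover have "t * \<bar>c - l * a\<bar> < a" using ta t0 by (simp add: algebra_simps)
      ultimately show False using h1 a0 by linarith
    qed
    then have Mu: "M *v u = l *\<^sub>R u" by (simp add: w'_def)
    define W' where "W' = {x\<in>W. x \<bullet> u = 0}"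
    have sW': "subspace W'" using sW unfolding W'_def subspace_def
      by (auto simp: inner_add_left)
    have inv': "\<forall>x\<in>W'. M *v x \<in> W'"
    proof
      fix x assume "x \<in> W'"
      then have xW: "x \<in> W" and xu: "x \<bullet> u = 0" by (auto simp: W'_def)
      have MxW: "M *v x \<in> W" using inv xW by blast
      have "(M *v x) \<bullet> u = x \<bullet> (M *v u)" by (rule symm_inner[OF sym])
      also have "\<dots> = 0" using xu by (simp add: Mu)
      finally show "M *v x \<in> W'" using MxW by (simp add: W'_def)
    qed
    have "u \<notin> W'" using uu by (simp add: W'_def)
    moreover have "W' \<subseteq> W" by (auto simp: W'_def)
    ultimately have "W' \<subset> W" using uW by blast
    moreover have "span W' = W'" using sW' by (rule span_eq_iff[THEN iffD2])
    moreover have "span W = W" using sW by (rule span_eq_iff[THEN iffD2])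
    ultimately have "span W' \<subset> span W" by (simp only:)
    then have "dim W' < dim W" by (rule dim_psubset)
    from less.hyps[OF this sW' inv'] obtain B' where B':
      "B' \<subseteq> W'" "W' \<subseteq> span B'" "pairwise orthogonal B'"
      "\<forall>b\<in>B'. norm b = 1 \<and> M *v b = (b \<bullet> (M *v b)) *\<^sub>R b" by blast
    show ?thesis
    proof (intro exI[of _ "insert u B'"] conjI)
      show "insert u B' \<subseteq> W" using B'(1) uW by (auto simp: W'_def)
      show "W \<subseteq> span (insert u B')"
      proof
        fix x assume xW: "x \<in> W"
        have "x - (x \<bullet> u) *\<^sub>R u \<in> W'" using xW uW sW uu
          by (auto simp: W'_def subspace_diff subspace_scale inner_diff_left)
        then have "x - (x \<bullet> u) *\<^sub>R u \<in> span (insert u B')" using B'(2) span_mono[of B' "insert u B'"] by blast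
        moreover have "(x \<bullet> u) *\<^sub>R u \<in> span (insert u B')" by (simp add: span_base span_scale)
        ultimately have "x - (x \<bullet> u) *\<^sub>R u + (x \<bullet> u) *\<^sub>R u \<in> span (insert u B')" by (rule span_add)
        then show "x \<in> span (insert u B')" by simp
      qed
      have ob: "orthogonal u b \<and> orthogonal b u" if "b \<in> B'" for b
      proof -
        have "b \<bullet> u = 0" using B'(1) that by (auto simp: W'_def)
        moreover then have "u \<bullet> b = 0" by (simp only: inner_commute)
        ultimately show ?thesis by (simp add: orthogonal_def)
      qed
      show "pairwise orthogonal (insert u B')" using B'(3) ob
        by (auto simp: pairwise_insert)
      show "\<forall>b\<in>insert u B'. norm b = 1 \<and> M *v b = (b \<bullet> (M *v b)) *\<^sub>R b"
      proof
        fix b assume "b \<in> insert u B'"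
        then consider "b = u" | "b \<in> B'" by blast
        then show "norm b = 1 \<and> M *v b = (b \<bullet> (M *v b)) *\<^sub>R b"
        proof cases
          case 1
          have ul: "u \<bullet> (M *v u) = l" by (simp only: l_def)
          show ?thesis unfolding 1 ul using nu Mu by simp
        next
          case 2 then show ?thesis using B'(4) by blast
        qed
      qed
    qed
  qed
qed

lemma spectral:
  fixes M :: "real^'p^'p"
  assumes sym: "transpose M = M"
  shows "\<exists>(V::real^'p^'p) l. transpose V ** V = mat 1 \<and> M ** V = V ** dg l"
proof -
  obtain B where B: "UNIV \<subseteq> span B" "pairwise orthogonal B"
     "\<forall>b\<in>B. norm b = 1 \<and> M *v b = (b \<bullet> (M *v b)) *\<^sub>R b"
    using spec_sub[OF sym, of UNIV] by auto
  have "0 \<notin> B" using B(3) by force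
  then have ind: "independent B" using B(2) pairwise_orthogonal_independent by blast
  have sp: "span B = UNIV" using B(1) by auto
  have fB: "finite B" and cB: "card B = CARD('p)"
    using indep_card_eq_dim_span[OF ind] sp by auto
  obtain e where e: "bij_betw e (UNIV::'p set) B"
    using finite_same_card_bij[of "UNIV::'p set" B] fB cB by auto
  have eB: "e k \<in> B" for k using e by (auto simp: bij_betw_def)
  have einj: "e k = e m \<Longrightarrow> k = m" for k m using e by (auto simp: bij_betw_def inj_on_def)
  define V :: "real^'p^'p" where "V = (\<chi> i k. e k $ i)"
  define l where "l = (\<lambda>k. e k \<bullet> (M *v e k))"
  have "transpose V ** V = mat 1"
  proof -
    have "(transpose V ** V) $ k $ m = (if k = m then 1 else 0)" for k m
    proof -
      have "(transpose V ** V) $ k $ m = e k \<bullet> e m"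
        by (simp add: V_def matrix_matrix_mult_def transpose_def inner_vec_def)
      also have "\<dots> = (if k = m then 1 else 0)"
      proof (cases "k = m")
        case True then show ?thesis using B(3) eB by (simp add: dot_square_norm)
      next
        case False
        then have "e k \<noteq> e m" using einj by blast
        then show ?thesis using B(2) eB False by (auto simp: pairwise_def orthogonal_def)
      qed
      finally show ?thesis .
    qed
    then show ?thesis by (simp add: vec_eq_iff mat_def)
  qed
  moreover have "M ** V = V ** dg l"
  proof -
    have "(M ** V) $ i $ k = (V ** dg l) $ i $ k" for i k
    proof -
      have "(M ** V) $ i $ k = (M *v e k) $ i"
        by (simp add: V_def matrix_matrix_mult_def matrix_vector_mult_def)
      also have "M *v e k = l k *\<^sub>R e k" using B(3) eB unfolding l_def by blast
      also have "(l k *\<^sub>R e k) $ i = l k * e k $ i" by simp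
      finally show ?thesis by (simp add: mult_dg_right V_def)
    qed
    then show ?thesis by (simp add: vec_eq_iff)
  qed
  ultimately show ?thesis by blast
qed



lemma eig_bound:
  fixes l :: "'p::finite \<Rightarrow> real"
  assumes "norm (dg (\<lambda>i. l i - 1)) \<le> 1/6"
  shows "\<bar>l i - 1\<bar> \<le> 1/6"
proof -
  have "(l i - 1)\<^sup>2 \<le> (\<Sum>j\<in>UNIV. (l j - 1)\<^sup>2)" by (rule member_le_sum) auto
  also have "\<dots> = (norm (dg (\<lambda>i. l i - 1)))\<^sup>2" by (simp add: norm_dg)
  also have "\<dots> \<le> (1/6)\<^sup>2" using assms by (intro power_mono) auto
  finally have "(l i - 1)\<^sup>2 \<le> (1/6)\<^sup>2" .
  then show ?thesis using abs_le_square_iff by (metis abs_of_nonneg zero_le_divide_1_iff zero_le_numeral) 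
qed

lemma svd_exists:
  fixes X :: "real^'p^'n"
  assumes X: "norm (transpose X ** X - mat 1) \<le> 1/6"
  shows "\<exists>(U::real^'p^'n) (V::real^'p^'p) (S::real^'p^'p).
      transpose U ** U = mat 1 \<and> transpose V ** V = mat 1 \<and>
      (\<forall>i j. i \<noteq> j \<longrightarrow> S $ i $ j = 0) \<and> (\<forall>i. S $ i $ i \<ge> 0) \<and>
      X = U ** S ** transpose V"
proof -
  define M where "M = transpose X ** X"
  have sym: "transpose M = M" by (simp add: M_def matrix_transpose_mul)
  obtain V :: "real^'p^'p" and l where V: "transpose V ** V = mat 1" and MV: "M ** V = V ** dg l"
    using spectral[OF sym] by blast
  have V': "V ** transpose V = mat 1" using V matrix_left_right_inverse by blast
  have Mdec: "M = V ** dg l ** transpose V"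
  proof -
    have "M = M ** (V ** transpose V)" by (simp add: V')
    also have "\<dots> = V ** dg l ** transpose V" by (simp add: matrix_mul_assoc MV)
    finally show ?thesis .
  qed
  have "M - mat 1 = V ** dg (\<lambda>i. l i - 1) ** transpose V"
  proof -
    have m1: "mat 1 = V ** dg (\<lambda>_. 1) ** transpose V" by (simp add: dg_one V')
    show ?thesis by (subst m1) (simp add: Mdec mat_sub3 dg_sub)
  qed
  then have "norm (M - mat 1) = norm (dg (\<lambda>i. l i - 1))" using orth_inv[OF V V] by simp
  then have lb: "\<bar>l i - 1\<bar> \<le> 1/6" for i using X eig_bound[of l i] by (simp add: M_def)
  have lpos: "l i > 0" for i using lb[of i] by linarith
  define s where "s i = sqrt (l i)" for i
  have spos: "s i > 0" for i using lpos by (simp add: s_def)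
  have ss: "s i * s i = l i" for i using lpos[of i] by (simp add: s_def)
  define U where "U = X ** V ** dg (\<lambda>i. 1 / s i)"
  have "transpose U ** U = dg (\<lambda>i. 1 / s i) ** (transpose V ** M ** V) ** dg (\<lambda>i. 1 / s i)"
    by (simp add: U_def M_def matrix_transpose_mul matrix_mul_assoc)
  also have "transpose V ** M ** V = dg l"
    by (simp add: matrix_mul_assoc[symmetric] MV) (simp add: matrix_mul_assoc V)
  also have "dg (\<lambda>i. 1 / s i) ** dg l ** dg (\<lambda>i. 1 / s i) = dg (\<lambda>_. 1)"
  proof -
    have "1 / s i * l i * (1 / s i) = 1" for i
    proof -
      have "1 / s i * l i * (1 / s i) = l i / (s i * s i)" by simp
      also have "\<dots> = 1" using ss[of i] lpos[of i] by simp
      finally show ?thesis .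
    qed
    then show ?thesis by (simp only: dg_mult_dg)
  qed
  finally have U: "transpose U ** U = mat 1" by (simp add: dg_one)
  have "U ** dg s ** transpose V = X ** V ** (dg (\<lambda>i. 1 / s i) ** dg s) ** transpose V"
    by (simp add: U_def matrix_mul_assoc)
  also have "dg (\<lambda>i. 1 / s i) ** dg s = mat 1"
  proof -
    have sne: "s i \<noteq> 0" for i using spos[of i] by simp
    have "(\<lambda>i. 1 / s i * s i) = (\<lambda>_. 1)" using sne by simp
    then show ?thesis by (simp only: dg_mult_dg dg_one)
  qed
  finally have "U ** dg s ** transpose V = X" by (simp add: matrix_mul_assoc[symmetric] V')
  then show ?thesis using U V spos
    by (intro exI[of _ U] exI[of _ V] exI[of _ "dg s"]) (auto simp: less_imp_le)
qed



lemma lipschitz_cont: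
  assumes "locally_lipschitz g"
  shows "continuous_on UNIV g"
proof -
  have "isCont g x" for x
  proof -
    obtain e L where "e > 0" and lL: "L-lipschitz_on (ball x e) g"
      using assms unfolding locally_lipschitz_def by blast
    have "continuous_on (ball x e) g" using lL by (rule lipschitz_on_continuous_on)
    then show ?thesis using \<open>e > 0\<close> by (intro continuous_on_interior) auto
  qed
  then show ?thesis by (simp add: continuous_at_imp_continuous_on)
qed

lemma cont_ZA: "continuous_on S (\<lambda>Z::real^'p^'n. Z ** calA Z)"
  unfolding calA_def matrix_matrix_mult_def transpose_def mat_def
  by (intro continuous_intros)

lemma spec_norm_iff:
  fixes Z :: "real^'p^'n"
  shows "spec_norm Z \<le> c \<longleftrightarrow> (\<forall>v. norm (Z *v v) \<le> c * norm v)"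
proof
  assume "spec_norm Z \<le> c"
  then show "\<forall>v. norm (Z *v v) \<le> c * norm v"
    using onorm[OF matrix_vector_mul_bounded_linear, of Z] unfolding spec_norm_def
    by (meson dual_order.trans mult_right_mono norm_ge_zero)
next
  assume "\<forall>v. norm (Z *v v) \<le> c * norm v"
  then show "spec_norm Z \<le> c" unfolding spec_norm_def by (intro onorm_le) auto
qed

lemma compact_K: "compact {Z::real^'p^'n. spec_norm Z \<le> c}"
proof -
  have eq: "{Z::real^'p^'n. spec_norm Z \<le> c} = (\<Inter>v. {Z. norm (Z *v v) - c * norm v \<le> 0})"
    by (auto simp: spec_norm_iff)
  have "closed {Z::real^'p^'n. norm (Z *v v) - c * norm v \<le> 0}" for v
    unfolding matrix_vector_mult_def by (intro closed_Collect_le continuous_intros)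
  then have cl: "closed {Z::real^'p^'n. spec_norm Z \<le> c}" unfolding eq by (intro closed_INT) auto
  have "norm Z \<le> real CARD('n) * (real CARD('p) * \<bar>c\<bar>)" if "spec_norm Z \<le> c" for Z :: "real^'p^'n"
  proof -
    have ent: "\<bar>Z $ i $ j\<bar> \<le> \<bar>c\<bar>" for i j
      using matrix_component_le_onorm[of Z i j] that unfolding spec_norm_def by auto
    have "norm Z \<le> (\<Sum>i\<in>UNIV. norm (Z $ i))" unfolding norm_vec_def by (rule L2_set_le_sum) auto
    also have "\<dots> \<le> (\<Sum>i\<in>(UNIV::'n set). real CARD('p) * \<bar>c\<bar>)"
    proof (rule sum_mono)
      fix i :: 'n
      have "norm (Z $ i) \<le> (\<Sum>j\<in>UNIV. \<bar>Z $ i $ j\<bar>)" by (rule norm_le_l1_cart)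
      also have "\<dots> \<le> (\<Sum>j\<in>(UNIV::'p set). \<bar>c\<bar>)" by (rule sum_mono) (rule ent)
      finally show "norm (Z $ i) \<le> real CARD('p) * \<bar>c\<bar>" by simp
    qed
    finally show ?thesis by simp
  qed
  then have "bounded {Z::real^'p^'n. spec_norm Z \<le> c}" by (auto simp: bounded_iff)
  with cl show ?thesis by (simp add: compact_eq_bounded_closed)
qed

lemma bdd_SUP:
  assumes "continuous_on UNIV (g :: real^'p^'n \<Rightarrow> real^'p^'n)"
  shows "bdd_above ((\<lambda>Z::real^'p^'n. norm (g (Z ** calA Z))) ` {Z. spec_norm Z \<le> c})"
proof -
  have "continuous_on {Z. spec_norm Z \<le> c} (\<lambda>Z::real^'p^'n. norm (g (Z ** calA Z)))"
    by (intro continuous_on_norm continuous_on_compose2[OF assms cont_ZA]) auto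
  then have "compact ((\<lambda>Z::real^'p^'n. norm (g (Z ** calA Z))) ` {Z. spec_norm Z \<le> c})"
    by (intro compact_continuous_image compact_K)
  then show ?thesis by (intro bounded_imp_bdd_above compact_imp_bounded)
qed

lemma isometry:
  fixes U :: "real^'p^'n"
  assumes "transpose U ** U = mat 1"
  shows "norm (U *v w) = norm w"
proof -
  have "(U *v w) \<bullet> (U *v w) = (transpose U *v (U *v w)) \<bullet> w"
    by (metis dot_lmul_matrix inner_commute transpose_matrix_vector)
  also have "\<dots> = w \<bullet> w" by (simp add: matrix_vector_mul_assoc assms)
  finally show ?thesis by (metis norm_eq_sqrt_inner)
qed

lemma dg_contract:
  assumes "\<And>i. \<bar>r i\<bar> \<le> 1"
  shows "norm (dg r *v w) \<le> norm w"
proof -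
  have e: "(dg r *v w) $ i = r i * w $ i" for i
  proof -
    have "(dg r *v w) $ i = (\<Sum>j\<in>UNIV. (if i = j then r i else 0) * w $ j)"
      by (simp add: matrix_vector_mult_def)
    also have "\<dots> = (\<Sum>j\<in>UNIV. if i = j then r i * w $ j else 0)"
      by (rule sum.cong) auto
    finally show ?thesis by simp
  qed
  have "(norm (dg r *v w))\<^sup>2 = (\<Sum>i\<in>UNIV. (r i * w $ i)\<^sup>2)"
    by (simp only: power2_norm_eq_inner) (simp add: inner_vec_def e power2_eq_square)
  also have "\<dots> \<le> (\<Sum>i\<in>UNIV. (w $ i)\<^sup>2)"
  proof (rule sum_mono)
    fix i
    have "(r i)\<^sup>2 \<le> 1" using assms[of i] abs_le_square_iff[of "r i" 1] by simp
    then have "(r i)\<^sup>2 * (w $ i)\<^sup>2 \<le> 1 * (w $ i)\<^sup>2" by (intro mult_right_mono) auto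
    then show "(r i * w $ i)\<^sup>2 \<le> (w $ i)\<^sup>2" by (simp add: power_mult_distrib)
  qed
  also have "\<dots> = (norm w)\<^sup>2" by (simp only: power2_norm_eq_inner) (simp add: inner_vec_def power2_eq_square)
  finally show ?thesis by (simp add: power2_le_iff_abs_le[symmetric])
qed


lemma scal:
  fixes s :: real
  assumes s0: "s \<ge> 0" and sb: "\<bar>s * s - 1\<bar> \<le> 1/6"
  shows "0 \<le> s * (3/2 - s * s / 2)" "s * (3/2 - s * s / 2) \<le> 1"
    "1 - s * (3/2 - s * s / 2) \<le> (s * s - 1)\<^sup>2 / 2"
proof -
  have s2: "s * s \<ge> 5/6" "s * s \<le> 7/6" using sb by linarith+
  have id: "1 - s * (3/2 - s * s / 2) = (1 - s)\<^sup>2 * (2 + s) / 2"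
    by (simp add: power2_eq_square algebra_simps)
  show "0 \<le> s * (3/2 - s * s / 2)" using s0 s2 by simp
  show "s * (3/2 - s * s / 2) \<le> 1"
  proof -
    have "0 \<le> (1 - s)\<^sup>2 * (2 + s) / 2" using s0 by simp
    then show ?thesis using id by linarith
  qed
  have s6: "s \<ge> 1/6"
  proof (rule ccontr)
    assume "\<not> s \<ge> 1/6"
    then have "s < 1/6" by simp
    then have "s * s \<le> s * (1/6)" using s0 by (intro mult_left_mono) auto
    then show False using s2 \<open>s < 1/6\<close> by linarith
  qed
  have "2 + s \<le> (1 + s)\<^sup>2" using s2 s6 by (simp add: power2_eq_square algebra_simps)
  then have "(1 - s)\<^sup>2 * (2 + s) \<le> (1 - s)\<^sup>2 * (1 + s)\<^sup>2" by (intro mult_left_mono) auto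
  also have "\<dots> = (s * s - 1)\<^sup>2" by (simp add: power2_eq_square algebra_simps)
  finally show "1 - s * (3/2 - s * s / 2) \<le> (s * s - 1)\<^sup>2 / 2" using id by simp
qed

lemma mat_add3: "(V::real^'a^'b) ** A ** W + V ** B ** W = V ** (A + B) ** (W::real^'c^'a)"
  by (simp add: vec_eq_iff matrix_matrix_mult_def sum.distrib[symmetric] algebra_simps sum_distrib_left sum_distrib_right)

lemma dg_add: "dg a + dg b = dg (\<lambda>i. a i + b i)"
  by (simp add: vec_eq_iff)

lemma sum_sq_le:
  fixes a :: "'i \<Rightarrow> real"
  assumes "finite A" "\<And>i. i \<in> A \<Longrightarrow> a i \<ge> 0"
  shows "(\<Sum>i\<in>A. (a i)\<^sup>2) \<le> (\<Sum>i\<in>A. a i)\<^sup>2"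
proof -
  have "(\<Sum>i\<in>A. (a i)\<^sup>2) \<le> (\<Sum>i\<in>A. a i * (\<Sum>j\<in>A. a j))"
  proof (rule sum_mono)
    fix i assume i: "i \<in> A"
    have "a i \<le> (\<Sum>j\<in>A. a j)" using assms i by (intro member_le_sum) auto
    then show "(a i)\<^sup>2 \<le> a i * (\<Sum>j\<in>A. a j)" using assms(2)[OF i]
      by (simp add: power2_eq_square mult_left_mono)
  qed
  also have "\<dots> = (\<Sum>i\<in>A. a i)\<^sup>2" by (simp add: power2_eq_square sum_distrib_right)
  finally show ?thesis .
qed



theorem mainTheorem15:
  fixes f :: "real^'p^'n \<Rightarrow> real" and gradf :: "real^'p^'n \<Rightarrow> real^'p^'n"
    and \<beta> :: real and X :: "real^'p^'n"
  assumes np: "CARD('p) \<le> CARD('n)"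
    and diff: "\<And>Y. (f has_derivative (\<lambda>H. gradf Y \<bullet> H)) (at Y)"
    and lipf: "locally_lipschitz f"
    and lipg: "locally_lipschitz gradf"
    and beta: "\<beta> > 0"
    and X: "norm (transpose X ** X - mat 1) \<le> 1/6"
  shows "hfun f \<beta> (stiefel_proj X) \<le> hfun f \<beta> X
     - (\<beta>/4 - (SUP Z\<in>{Z. spec_norm Z \<le> 1 + 1/12}. norm (gradf (Z ** calA Z))) / 2)
       * (norm (transpose X ** X - mat 1))\<^sup>2"
proof -
  define P where "P = (\<lambda>Q. \<exists>(U::real^'p^'n) (V::real^'p^'p) (S::real^'p^'p).
      transpose U ** U = mat 1 \<and> transpose V ** V = mat 1 \<and>
      (\<forall>i j. i \<noteq> j \<longrightarrow> S $ i $ j = 0) \<and> (\<forall>i. S $ i $ i \<ge> 0) \<and>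
      X = U ** S ** transpose V \<and> Q = U ** transpose V)"
  have "\<exists>Q. P Q" using svd_exists[OF X] unfolding P_def by blast
  then have "P (stiefel_proj X)" unfolding stiefel_proj_def P_def by (rule someI_ex)
  then obtain U :: "real^'p^'n" and V :: "real^'p^'p" and S :: "real^'p^'p" where
    U: "transpose U ** U = mat 1" and V: "transpose V ** V = mat 1" and
    Soff: "\<forall>i j. i \<noteq> j \<longrightarrow> S $ i $ j = 0" and Snn: "\<forall>i. S $ i $ i \<ge> 0" and
    XU: "X = U ** S ** transpose V" and QU: "stiefel_proj X = U ** transpose V"
    unfolding P_def by blast
  define Q where "Q = stiefel_proj X"
  define s where "s i = S $ i $ i" for i
  have Sdg: "S = dg s" using Soff by (simp add: vec_eq_iff s_def)
  have s0: "s i \<ge> 0" for i using Snn by (simp add: s_def)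
  have V': "V ** transpose V = mat 1" using V matrix_left_right_inverse by blast
  have hQ: "Q = U ** dg (\<lambda>_. 1) ** transpose V" using QU by (simp add: Q_def dg_one)
  have hX: "X = U ** dg s ** transpose V" using XU Sdg by simp
  define d where "d = (\<lambda>i. s i * s i - 1)"
  have m1: "mat 1 = V ** dg (\<lambda>_. 1) ** transpose V" by (simp add: dg_one V')
  have XX: "transpose X ** X - mat 1 = V ** dg d ** transpose V"
    unfolding hX udv_gram[OF U] by (subst m1) (simp add: mat_sub3 dg_sub d_def)
  define N where "N = norm (transpose X ** X - mat 1)"
  have Nd: "N = norm (dg d)" unfolding N_def XX by (rule orth_inv[OF V V])
  have db: "\<bar>d i\<bar> \<le> 1/6" for i
    using eig_bound[of "\<lambda>i. s i * s i" i] X Nd N_def by (simp add: d_def)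
  define y where "y i = s i * (3/2 - s i * s i / 2)" for i
  have y01: "0 \<le> y i" "y i \<le> 1" "1 - y i \<le> (d i)\<^sup>2 / 2" for i
    using scal[OF s0[of i]] db[of i] by (simp_all add: y_def d_def)
  define Yv where "Yv = X ** calA X"
  have hY: "Yv = U ** dg y ** transpose V"
    unfolding Yv_def hX udv_calA(2)[OF U V V'] y_def by simp
  have hQQ: "transpose Q ** Q = mat 1"
    unfolding hQ udv_gram[OF U] by (simp add: dg_one V')
  have hQA: "Q ** calA Q = Q"
    unfolding hQ udv_calA(2)[OF U V V'] by simp
  have hfQ: "hfun f \<beta> (stiefel_proj X) = f Q"
    using hQQ hQA by (simp add: hfun_def Q_def)
  have hfX: "hfun f \<beta> X = f Yv + \<beta> / 4 * N\<^sup>2"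
    by (simp add: hfun_def Yv_def N_def)
  define K where "K = {Z::real^'p^'n. spec_norm Z \<le> 1 + 1/12}"
  define g where "g = (\<lambda>Z::real^'p^'n. norm (gradf (Z ** calA Z)))"
  define Msup where "Msup = (SUP Z\<in>K. g Z)"
  have bdd: "bdd_above (g ` K)"
    unfolding g_def K_def by (rule bdd_SUP[OF lipschitz_cont[OF lipg]])
  have gK: "g W \<le> Msup" if "W \<in> K" for W
    unfolding Msup_def using that bdd by (rule cSUP_upper)
  have "spec_norm (0::real^'p^'n) \<le> 1 + 1/12" unfolding spec_norm_iff by simp
  then have "0 \<in> K" by (simp add: K_def)
  then have M0: "Msup \<ge> 0" using gK[of 0] unfolding g_def by (meson norm_ge_zero order_trans)
  have gradb: "norm (gradf x) \<le> Msup" if xs: "x \<in> closed_segment Yv Q" for x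
  proof -
    obtain t where t: "0 \<le> t" "t \<le> 1" and xt: "x = (1 - t) *\<^sub>R Yv + t *\<^sub>R Q"
      using xs by (auto simp: closed_segment_def)
    define z where "z i = (1 - t) * y i + t" for i
    have xz: "x = U ** dg z ** transpose V"
      unfolding xt hY hQ mat_scale3 mat_add3 dg_scale dg_add z_def by simp
    have "\<exists>r. 0 \<le> r \<and> r \<le> 1 \<and> r * (3/2 - r * r / 2) = z i" for i
    proof -
      have a1: "0 \<le> (1 - t) * y i" using y01(1)[of i] t by simp
      have a2: "(1 - t) * y i \<le> 1 - t" using mult_left_mono[OF y01(2)[of i], of "1 - t"] t by simp
      have "0 \<le> z i" "z i \<le> 1" using a1 a2 t unfolding z_def by linarith+
      moreover have "continuous_on {0..1} (\<lambda>r::real. r * (3/2 - r * r / 2))"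
        by (intro continuous_intros) auto
      ultimately show ?thesis using IVT'[of "\<lambda>r::real. r * (3/2 - r * r / 2)" 0 "z i" 1] by auto
    qed
    then obtain r where r: "\<And>i. 0 \<le> r i \<and> r i \<le> 1 \<and> r i * (3/2 - r i * r i / 2) = z i"
      by metis
    define W where "W = U ** dg r ** transpose V"
    have WA: "W ** calA W = x"
      unfolding W_def udv_calA(2)[OF U V V'] xz using r by simp
    have "spec_norm W \<le> 1 + 1/12"
      unfolding spec_norm_iff
    proof
      fix v :: "real^'p"
      have "norm (W *v v) = norm (U *v (dg r *v (transpose V *v v)))"
        by (simp only: W_def matrix_vector_mul_assoc matrix_mul_assoc)
      also have "\<dots> = norm (dg r *v (transpose V *v v))" by (rule isometry[OF U])
      also have "\<dots> \<le> norm (transpose V *v v)" using r by (intro dg_contract) auto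
      also have "\<dots> = norm v" using V' by (intro isometry) simp
      also have "\<dots> \<le> (1 + 1/12) * norm v" by simp
      finally show "norm (W *v v) \<le> (1 + 1/12) * norm v" .
    qed
    then have "W \<in> K" by (simp add: K_def)
    then show ?thesis using gK[of W] WA by (simp add: g_def)
  qed
  have "norm (f Q - f Yv) \<le> Msup * norm (Q - Yv)"
  proof (rule differentiable_bound[where f' = "\<lambda>x H. gradf x \<bullet> H"])
    show "convex (closed_segment Yv Q)" by simp
    show "(f has_derivative (\<lambda>H. gradf x \<bullet> H)) (at x within closed_segment Yv Q)" for x
      using diff by (rule has_derivative_at_withinI)
    show "onorm (\<lambda>H. gradf x \<bullet> H) \<le> Msup" if "x \<in> closed_segment Yv Q" for x
    proof (rule onorm_le)
      fix H
      have "norm (gradf x \<bullet> H) \<le> norm (gradf x) * norm H" by (simp add: Cauchy_Schwarz_ineq2)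
      also have "\<dots> \<le> Msup * norm H" using gradb[OF that] by (intro mult_right_mono) auto
      finally show "norm (gradf x \<bullet> H) \<le> Msup * norm H" .
    qed
  qed auto
  then have fQ: "f Q \<le> f Yv + Msup * norm (Q - Yv)" by simp
  have "Q - Yv = U ** dg (\<lambda>i. 1 - y i) ** transpose V"
    unfolding hQ hY mat_sub3 dg_sub by simp
  then have nQY: "norm (Q - Yv) = norm (dg (\<lambda>i. 1 - y i))" using orth_inv[OF U V] by simp
  have "(norm (dg (\<lambda>i. 1 - y i)))\<^sup>2 \<le> (N\<^sup>2 / 2)\<^sup>2"
  proof -
    have "(norm (dg (\<lambda>i. 1 - y i)))\<^sup>2 = (\<Sum>i\<in>UNIV. (1 - y i)\<^sup>2)" by (rule norm_dg)
    also have "\<dots> \<le> (\<Sum>i\<in>UNIV. ((d i)\<^sup>2 / 2)\<^sup>2)"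
      using y01 by (intro sum_mono power_mono) auto
    also have "\<dots> = (\<Sum>i\<in>UNIV. ((d i)\<^sup>2)\<^sup>2) / 4" by (simp add: sum_divide_distrib power_divide)
    also have "\<dots> \<le> (\<Sum>i\<in>UNIV. (d i)\<^sup>2)\<^sup>2 / 4" by (intro divide_right_mono sum_sq_le) auto
    also have "(\<Sum>i\<in>UNIV. (d i)\<^sup>2) = N\<^sup>2" using Nd norm_dg[of d] by simp
    finally show ?thesis by (simp add: power_divide)
  qed
  then have "norm (Q - Yv) \<le> N\<^sup>2 / 2" unfolding nQY by (rule power2_le_imp_le) simp
  then have "Msup * norm (Q - Yv) \<le> Msup * (N\<^sup>2 / 2)" using M0 by (rule mult_left_mono)
  with fQ have "f Q \<le> f Yv + Msup * (N\<^sup>2 / 2)" by linarith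
  then show ?thesis unfolding hfQ hfX
    by (simp add: Msup_def K_def g_def N_def[symmetric] algebra_simps)
qed

end
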